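(* For nonnegative integers $s_1,s_2$, let $N(s_1,s_2)$ be the number of $(x_1,x_2,x_3,x_4)\in\mathbb Z_{\ge0}^4$ with $x_1+2x_2+x_3=s_1$ and $x_1+x_2+x_4=s_2$ (the vector partition function of $\begin{pmatrix}1&2&1&0\\1&1&0&1\end{pmatrix}$). For $\boldsymbol\alpha=(\alpha_1,\alpha_2)\in\mathbb C^2$ with $(\alpha_1+\alpha_2)(2\alpha_1+\alpha_2)\ne0$ define $$W(\mathbf s;\boldsymbol\alpha)=\frac{\alpha_1^2\,A+2\alpha_1\alpha_2\,B+\alpha_2^2\,C}{2(\alpha_1+\alpha_2)(2\alpha_1+\alpha_2)},$$ where $A=s_1^2+4s_1+\tfrac72+\tfrac12(-1)^{s_1}$, $B=s_1s_2+\tfrac32s_1+2s_2+\tfrac{11}4+\tfrac14(-1)^{s_1}$, $C=s_2^2+3s_2+2$. Then: (i) if $s_1\le s_2$, $N(s_1,s_2)=W(\mathbf s;(1,0))=\frac{s_1^2}{4}+s_1+\frac{7+(-1)^{s_1}}{8}$; (ii) if $s_1/2-1\le s_2\le s_1+1$, $N(s_1,s_2)=\operatorname{Re}W(\mathbf s;(1,-1\pm i))=s_1s_2-\frac{s_1^2+2s_2^2}{4}+\frac{s_1+s_2}{2}+\frac{7+(-1)^{s_1}}{8}$; (iii) if $s_2\le s_1/2$, $N(s_1,s_2)=W(\mathbf s;(0,1))=\frac{s_2^2}{2}+\frac{3s_2}{2}+1$. *)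

theory Defs
  imports Complex_Main
begin

definition N :: "nat \<Rightarrow> nat \<Rightarrow> nat" where
  "N s1 s2 = card {(x1::nat, x2::nat, x3::nat, x4::nat).
                     x1 + 2 * x2 + x3 = s1 \<and> x1 + x2 + x4 = s2}"

definition WA :: "nat \<Rightarrow> complex" where
  "WA s1 = of_nat s1 ^ 2 + 4 * of_nat s1 + 7/2 + (1/2) * (-1) ^ s1"

definition WB :: "nat \<Rightarrow> nat \<Rightarrow> complex" where
  "WB s1 s2 = of_nat s1 * of_nat s2 + (3/2) * of_nat s1 + 2 * of_nat s2 + 11/4 + (1/4) * (-1) ^ s1"

definition WC :: "nat \<Rightarrow> complex" where
  "WC s2 = of_nat s2 ^ 2 + 3 * of_nat s2 + 2"

definition W :: "nat \<Rightarrow> nat \<Rightarrow> complex \<Rightarrow> complex \<Rightarrow> complex" where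
  "W s1 s2 a1 a2 = (a1^2 * WA s1 + 2 * a1 * a2 * WB s1 s2 + a2^2 * WC s2)
                    / (2 * (a1 + a2) * (2 * a1 + a2))"

end

theory Submission imports Defs begin
definition S :: "nat \<Rightarrow> nat \<Rightarrow> (nat \<times> nat) set" where
  "S s1 s2 = {(a,b). a + 2*b \<le> s1 \<and> a + b \<le> s2}"

lemma S_fin: "finite (S s1 s2)"
proof -
  have "S s1 s2 \<subseteq> {0..s1} \<times> {0..s1}" unfolding S_def by auto
  thus ?thesis by (rule finite_subset) auto
qed

lemma S_rec:
  assumes "s1 \<ge> 2" "s2 \<ge> 1"
  shows "card (S s1 s2) = min s1 s2 + 1 + card (S (s1-2) (s2-1))"
proof -
  have e: "S s1 s2 = (\<lambda>a. (a,0)) ` {0..min s1 s2} \<union> (\<lambda>(a,b). (a,b+1)) ` S (s1-2) (s2-1)"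
  proof (rule set_eqI, clarify)
    fix a b
    show "((a,b) \<in> S s1 s2) = ((a,b) \<in> (\<lambda>a. (a,0)) ` {0..min s1 s2} \<union> (\<lambda>(a,b). (a,b+1)) ` S (s1-2) (s2-1))"
    proof (cases b)
      case 0 thus ?thesis using assms by (auto simp: S_def)
    next
      case (Suc c)
      have "(a, Suc c) = (\<lambda>(a,b). (a,b+1)) (a,c)" by simp
      thus ?thesis using assms Suc by (auto simp: S_def image_iff)
    qed
  qed
  have "card (S s1 s2) = card ((\<lambda>a. (a,0::nat)) ` {0..min s1 s2}) + card ((\<lambda>(a,b). (a,b+1::nat)) ` S (s1-2) (s2-1))"
    unfolding e by (rule card_Un_disjoint) (auto simp: S_fin)
  also have "card ((\<lambda>a. (a,0::nat)) ` {0..min s1 s2}) = min s1 s2 + 1"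
    by (subst card_image) (auto simp: inj_on_def)
  also have "card ((\<lambda>(a,b). (a,b+1::nat)) ` S (s1-2) (s2-1)) = card (S (s1-2) (s2-1))"
    by (rule card_image) (auto simp: inj_on_def)
  finally show ?thesis .
qed

lemma S_s2_0: "S s1 0 = {(0,0)}" by (auto simp: S_def)
lemma S_s1_0: "S 0 s2 = {(0,0)}" by (auto simp: S_def)
lemma S_s1_1: "s2 \<ge> 1 \<Longrightarrow> S 1 s2 = {(0,0),(1,0)}" by (auto simp: S_def)
lemma S_s1_1c: "s2 \<ge> 1 \<Longrightarrow> card (S (Suc 0) s2) = 2" using S_s1_1[of s2] by simp

lemma neg1_pow_sub2: "s \<ge> 2 \<Longrightarrow> (-1::real)^(s-2) = (-1)^s"
  by (metis add_diff_inverse_nat linorder_not_less power_add power_minus1_even mult_1 mult.commute)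

lemma reg1: "s1 \<le> s2 \<Longrightarrow> real (card (S s1 s2)) = real s1 ^ 2 / 4 + real s1 + (7 + (-1) ^ s1) / 8"
proof (induction s1 arbitrary: s2 rule: less_induct)
  case (less s1)
  show ?case
  proof (cases "s1 \<ge> 2")
    case True
    have "real (card (S s1 s2)) = real s1 + 1 + real (card (S (s1-2) (s2-1)))"
      using S_rec[OF True] True less.prems by simp
    also have "real (card (S (s1-2) (s2-1))) = real (s1-2) ^ 2 / 4 + real (s1-2) + (7 + (-1) ^ (s1-2)) / 8"
      using less.IH[of "s1-2" "s2-1"] True less.prems by simp
    finally show ?thesis using True by (simp add: neg1_pow_sub2 of_nat_diff power2_eq_square field_simps)
  next
    case False
    then consider "s1 = 0" | "s1 = 1" by linarith
    thus ?thesis using less.prems by cases (auto simp: S_s1_0 S_s1_1 S_s1_1c)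
  qed
qed

lemma reg3: "2 * s2 \<le> s1 \<Longrightarrow> real (card (S s1 s2)) = real s2 ^ 2 / 2 + 3 * real s2 / 2 + 1"
proof (induction s1 arbitrary: s2 rule: less_induct)
  case (less s1)
  show ?case
  proof (cases "s2 \<ge> 1")
    case True
    have "real (card (S s1 s2)) = real s2 + 1 + real (card (S (s1-2) (s2-1)))"
      using S_rec True less.prems by simp
    also have "real (card (S (s1-2) (s2-1))) = real (s2-1) ^ 2 / 2 + 3 * real (s2-1) / 2 + 1"
      using less.IH[of "s1-2" "s2-1"] True less.prems by simp
    finally show ?thesis using True by (simp add: of_nat_diff power2_eq_square field_simps)
  next
    case False
    hence "s2 = 0" by simp
    thus ?thesis by (simp add: S_s2_0)
  qed
qed

lemma reg2: "s1 \<le> 2 * s2 + 2 \<Longrightarrow> s2 \<le> s1 + 1 \<Longrightarrow> real (card (S s1 s2)) =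
   real s1 * real s2 - (real s1 ^ 2 + 2 * real s2 ^ 2) / 4 + (real s1 + real s2) / 2 + (7 + (-1) ^ s1) / 8"
proof (induction s1 arbitrary: s2 rule: less_induct)
  case (less s1)
  show ?case
  proof (cases "s2 = s1 + 1")
    case True
    thus ?thesis using reg1[of s1 s2] by (simp add: power2_eq_square field_simps)
  next
    case ne: False
    show ?thesis
    proof (cases "s1 \<ge> 2 \<and> s2 \<ge> 1")
      case True
      have "real (card (S s1 s2)) = real s2 + 1 + real (card (S (s1-2) (s2-1)))"
        using S_rec True less.prems ne by simp
      also have "real (card (S (s1-2) (s2-1))) = real (s1-2) * real (s2-1) - (real (s1-2) ^ 2 + 2 * real (s2-1) ^ 2) / 4 + (real (s1-2) + real (s2-1)) / 2 + (7 + (-1) ^ (s1-2)) / 8"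
        using less.IH[of "s1-2" "s2-1"] True less.prems ne by simp
      finally show ?thesis using True by (simp add: neg1_pow_sub2 of_nat_diff power2_eq_square field_simps)
    next
      case False
      then consider "s1 = 0" | "s1 = 1" | "s2 = 0" by linarith
      thus ?thesis
      proof cases
        case 1 thus ?thesis using less.prems ne by (cases s2) (auto simp: S_s1_0)
      next
        case 2
        with less.prems ne have "s2 = 0 \<or> s2 = 1" by linarith
        thus ?thesis using 2 by (auto simp: S_s1_1c S_s2_0)
      next
        case 3 
        with less.prems have "s1 = 0 \<or> s1 = 1 \<or> s1 = 2" by linarith
        thus ?thesis using 3 by (auto simp: S_s2_0)
      qed
    qed
  qed
qed

lemma N_S: "N s1 s2 = card (S s1 s2)"
proof -
  have "{(x1::nat, x2::nat, x3::nat, x4::nat). x1 + 2 * x2 + x3 = s1 \<and> x1 + x2 + x4 = s2}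
     = (\<lambda>(a,b). (a, b, s1 - a - 2*b, s2 - a - b)) ` S s1 s2"
    by (auto simp: S_def image_iff)
  moreover have "inj_on (\<lambda>(a,b). (a, b, s1 - a - 2*b, s2 - a - b)) (S s1 s2)"
    by (auto simp: inj_on_def)
  ultimately show ?thesis unfolding N_def by (simp add: card_image)
qed

lemma pm1: "(-1::complex)^n = complex_of_real ((-1)^n)" by simp

lemma WA_r: "WA s1 = complex_of_real (real s1 ^ 2 + 4 * real s1 + 7/2 + (1/2) * (-1) ^ s1)"
  by (simp add: WA_def)
lemma WB_r: "WB s1 s2 = complex_of_real (real s1 * real s2 + (3/2) * real s1 + 2 * real s2 + 11/4 + (1/4) * (-1) ^ s1)"
  by (simp add: WB_def)
lemma WC_r: "WC s2 = complex_of_real (real s2 ^ 2 + 3 * real s2 + 2)"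
  by (simp add: WC_def)

lemma ReP: "Re ((of_real A + 2*(-1+\<i>)*of_real B + (-1+\<i>)^2 * of_real C) / (2*(1+(-1+\<i>))*(2*1+(-1+\<i>)))) = (-A+4*B-2*C)/4"
  by (simp add: power2_eq_square field_simps Complex_eq Re_divide)
lemma ReM: "Re ((of_real A + 2*(-1-\<i>)*of_real B + (-1-\<i>)^2 * of_real C) / (2*(1+(-1-\<i>))*(2*1+(-1-\<i>)))) = (-A+4*B-2*C)/4"
  by (simp add: power2_eq_square field_simps Complex_eq Re_divide)

lemma W10: "W s1 s2 1 0 = of_nat s1 ^ 2 / 4 + of_nat s1 + (7 + (-1) ^ s1) / 8"
  by (simp add: W_def WA_def field_simps)
lemma W01: "W s1 s2 0 1 = of_nat s2 ^ 2 / 2 + 3 * of_nat s2 / 2 + 1"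
  by (simp add: W_def WC_def field_simps)

lemma WP: "Re (W s1 s2 1 (-1 + \<i>)) = real s1 * real s2 - (real s1 ^ 2 + 2 * real s2 ^ 2) / 4
           + (real s1 + real s2) / 2 + (7 + (-1) ^ s1) / 8"
proof -
  define A where "A = real s1 ^ 2 + 4 * real s1 + 7/2 + (1/2) * (-1) ^ s1"
  define B where "B = real s1 * real s2 + (3/2) * real s1 + 2 * real s2 + 11/4 + (1/4) * (-1) ^ s1"
  define C where "C = real s2 ^ 2 + 3 * real s2 + 2"
  have "W s1 s2 1 (-1 + \<i>) = (of_real A + 2*(-1+\<i>)*of_real B + (-1+\<i>)^2 * of_real C) / (2*(1+(-1+\<i>))*(2*1+(-1+\<i>)))"
    unfolding W_def WA_r WB_r WC_r A_def B_def C_def by simp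
  hence "Re (W s1 s2 1 (-1 + \<i>)) = (-A+4*B-2*C)/4" using ReP by simp
  thus ?thesis unfolding A_def B_def C_def by (simp add: field_simps power2_eq_square)
qed
lemma WM: "Re (W s1 s2 1 (-1 - \<i>)) = real s1 * real s2 - (real s1 ^ 2 + 2 * real s2 ^ 2) / 4
           + (real s1 + real s2) / 2 + (7 + (-1) ^ s1) / 8"
proof -
  define A where "A = real s1 ^ 2 + 4 * real s1 + 7/2 + (1/2) * (-1) ^ s1"
  define B where "B = real s1 * real s2 + (3/2) * real s1 + 2 * real s2 + 11/4 + (1/4) * (-1) ^ s1"
  define C where "C = real s2 ^ 2 + 3 * real s2 + 2"
  have "W s1 s2 1 (-1 - \<i>) = (of_real A + 2*(-1-\<i>)*of_real B + (-1-\<i>)^2 * of_real C) / (2*(1+(-1-\<i>))*(2*1+(-1-\<i>)))"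
    unfolding W_def WA_r WB_r WC_r A_def B_def C_def by simp
  hence "Re (W s1 s2 1 (-1 - \<i>)) = (-A+4*B-2*C)/4" using ReM by simp
  thus ?thesis unfolding A_def B_def C_def by (simp add: field_simps power2_eq_square)
qed

theorem mainTheorem6:
  fixes s1 s2 :: nat
  shows
   "(s1 \<le> s2 \<longrightarrow>
       complex_of_nat (N s1 s2) = W s1 s2 1 0 \<and>
       W s1 s2 1 0 = of_nat s1 ^ 2 / 4 + of_nat s1 + (7 + (-1) ^ s1) / 8)
  \<and> (real s1 / 2 - 1 \<le> real s2 \<and> s2 \<le> s1 + 1 \<longrightarrow>
       real (N s1 s2) = Re (W s1 s2 1 (-1 + \<i>)) \<and>
       real (N s1 s2) = Re (W s1 s2 1 (-1 - \<i>)) \<and>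
       Re (W s1 s2 1 (-1 + \<i>)) = real s1 * real s2 - (real s1 ^ 2 + 2 * real s2 ^ 2) / 4
           + (real s1 + real s2) / 2 + (7 + (-1) ^ s1) / 8 \<and>
       Re (W s1 s2 1 (-1 - \<i>)) = real s1 * real s2 - (real s1 ^ 2 + 2 * real s2 ^ 2) / 4
           + (real s1 + real s2) / 2 + (7 + (-1) ^ s1) / 8)
  \<and> (real s2 \<le> real s1 / 2 \<longrightarrow>
       complex_of_nat (N s1 s2) = W s1 s2 0 1 \<and>
       W s1 s2 0 1 = of_nat s2 ^ 2 / 2 + 3 * of_nat s2 / 2 + 1)"
proof (intro conjI impI)
  assume h: "s1 \<le> s2"
  have "complex_of_nat (N s1 s2) = complex_of_real (real (N s1 s2))" by simp
  also have "\<dots> = complex_of_real (real s1 ^ 2 / 4 + real s1 + (7 + (-1) ^ s1) / 8)"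
    using reg1[OF h] by (simp add: N_S)
  also have "\<dots> = W s1 s2 1 0" unfolding W10 by simp
  finally show "complex_of_nat (N s1 s2) = W s1 s2 1 0" .
  show "W s1 s2 1 0 = of_nat s1 ^ 2 / 4 + of_nat s1 + (7 + (-1) ^ s1) / 8" by (rule W10)
next
  assume h: "real s1 / 2 - 1 \<le> real s2 \<and> s2 \<le> s1 + 1"
  hence a: "s1 \<le> 2 * s2 + 2" "s2 \<le> s1 + 1" by linarith+
  show "real (N s1 s2) = Re (W s1 s2 1 (-1 + \<i>))" unfolding WP N_S by (rule reg2[OF a])
  show "real (N s1 s2) = Re (W s1 s2 1 (-1 - \<i>))" unfolding WM N_S by (rule reg2[OF a])
  show "Re (W s1 s2 1 (-1 + \<i>)) = real s1 * real s2 - (real s1 ^ 2 + 2 * real s2 ^ 2) / 4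
           + (real s1 + real s2) / 2 + (7 + (-1) ^ s1) / 8" by (rule WP)
  show "Re (W s1 s2 1 (-1 - \<i>)) = real s1 * real s2 - (real s1 ^ 2 + 2 * real s2 ^ 2) / 4
           + (real s1 + real s2) / 2 + (7 + (-1) ^ s1) / 8" by (rule WM)
next
  assume h: "real s2 \<le> real s1 / 2"
  hence a: "2 * s2 \<le> s1" by linarith
  have "complex_of_nat (N s1 s2) = complex_of_real (real (N s1 s2))" by simp
  also have "\<dots> = complex_of_real (real s2 ^ 2 / 2 + 3 * real s2 / 2 + 1)"
    using reg3[OF a] by (simp add: N_S)
  also have "\<dots> = W s1 s2 0 1" unfolding W01 by simp
  finally show "complex_of_nat (N s1 s2) = W s1 s2 0 1" .
  show "W s1 s2 0 1 = of_nat s2 ^ 2 / 2 + 3 * of_nat s2 / 2 + 1" by (rule W01)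
qed

end
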